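(* In the setting and Algorithm 1 described in the context, for every iteration $k\in\{1,\dots,T\}$, every realization of the random choices in iterations $1,\dots,k-1$, and every $i\in[n]$, letting $y^{(i)}_k$ denote the value of $y_k$ obtained when coordinate $i$ is selected in iteration $k$, we have $$f_\mu(x_k)-f_\mu(y^{(i)}_k)\geq\frac12\langle\nabla f_\mu(x_k),\,x_k-y^{(i)}_k\rangle.$$
   Context: Setting: $A\in\mathbb{R}^{m\times n}_{\geq 0}$ has every column nonzero; $\|A_{:i}\|_\infty$ is the largest entry of column $i$. Let $\epsilon\in(0,1)$, $\mu=\frac{\epsilon}{4\log(nm/\epsilon)}$, $L=4/\mu$, $f_\mu(x)=\vec 1^Tx+\mu\sum_{j=1}^m\exp(\frac1\mu(1-(Ax)_j))$, $\Delta=\{x: 0\leq x_i\leq 3/\|A_{:i}\|_\infty\ \forall i\}$, and for $x,y\in\mathbb{R}^n$ let $V_x(y)=\frac12\sum_i\|A_{:i}\|_\infty(x_i-y_i)^2$. Algorithm 1 (input $A$, a starting point $x^{\mathrm{start}}\in\Delta$, $f_\mu$, $\epsilon$): set $\tau=\frac{1}{8nL}$, $T=\lceil 8nL\log(1/\epsilon)\rceil$, $x_0=y_0=z_0=x^{\mathrm{start}}$, $\alpha_0=\frac1{nL}$. For $k=1,\dots,T$: $\alpha_k=\alpha_{k-1}/(1-\tau)$; $x_k=\tau z_{k-1}+(1-\tau)y_{k-1}$; choose $i\in[n]$ uniformly at random; let $\xi_k^{(i)}$ be $\nabla_i f_\mu(x_k)$ truncated to $[-1,1]$; set $z_k=\arg\min_{z\in\Delta}\{V_{z_{k-1}}(z)+n\alpha_k\xi^{(i)}_k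 z_i\}$ (i.e. $z_k$ equals $z_{k-1}$ except its $i$-th coordinate is $z_{k-1,i}-n\alpha_k\xi^{(i)}_k/\|A_{:i}\|_\infty$ projected onto $[0,3/\|A_{:i}\|_\infty]$); set $y_k=x_k+\frac{1}{n\alpha_kL}(z_k-z_{k-1})$. Output $y_T$. *)

theory Defs
  imports "HOL-Analysis.Analysis"
begin

text \<open>Conventions: the matrix A is m x n, given as a function A :: nat => nat => real,
  A j i being the entry in row j (j < m) and column i (i < n); indices are 0-based.
  Vectors in R^n are functions nat => real, only the components i < n matter.\<close>

definition colmax :: "(nat \<Rightarrow> nat \<Rightarrow> real) \<Rightarrow> nat \<Rightarrow> nat \<Rightarrow> real" where
  "colmax A m i = Max ((\<lambda>j. A j i) ` {..<m})"

definition Amul :: "(nat \<Rightarrow> nat \<Rightarrow> real) \<Rightarrow> nat \<Rightarrow> (nat \<Rightarrow> real) \<Rightarrow> nat \<Rightarrow> real" where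
  "Amul A n x j = (\<Sum>i<n. A j i * x i)"

definition mu_par :: "nat \<Rightarrow> nat \<Rightarrow> real \<Rightarrow> real" where
  "mu_par m n eps = eps / (4 * ln (real n * real m / eps))"

definition L_par :: "nat \<Rightarrow> nat \<Rightarrow> real \<Rightarrow> real" where
  "L_par m n eps = 4 / mu_par m n eps"

definition f_mu :: "(nat \<Rightarrow> nat \<Rightarrow> real) \<Rightarrow> nat \<Rightarrow> nat \<Rightarrow> real \<Rightarrow> (nat \<Rightarrow> real) \<Rightarrow> real" where
  "f_mu A m n mu x = (\<Sum>i<n. x i) + mu * (\<Sum>j<m. exp ((1 - Amul A n x j) / mu))"

definition partial :: "((nat \<Rightarrow> real) \<Rightarrow> real) \<Rightarrow> nat \<Rightarrow> (nat \<Rightarrow> real) \<Rightarrow> real" where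
  "partial g i x = deriv (\<lambda>t. g (x(i := t))) (x i)"

definition Delta :: "(nat \<Rightarrow> nat \<Rightarrow> real) \<Rightarrow> nat \<Rightarrow> nat \<Rightarrow> (nat \<Rightarrow> real) set" where
  "Delta A m n = {x. \<forall>i<n. 0 \<le> x i \<and> x i \<le> 3 / colmax A m i}"

definition clamp :: "real \<Rightarrow> real \<Rightarrow> real \<Rightarrow> real" where
  "clamp lo hi v = max lo (min hi v)"

definition tau_par :: "nat \<Rightarrow> nat \<Rightarrow> real \<Rightarrow> real" where
  "tau_par m n eps = 1 / (8 * real n * L_par m n eps)"

definition alpha_k :: "nat \<Rightarrow> nat \<Rightarrow> real \<Rightarrow> nat \<Rightarrow> real" where
  "alpha_k m n eps k = (1 / (real n * L_par m n eps)) / (1 - tau_par m n eps) ^ k"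

definition T_par :: "nat \<Rightarrow> nat \<Rightarrow> real \<Rightarrow> nat" where
  "T_par m n eps = nat \<lceil>8 * real n * L_par m n eps * ln (1 / eps)\<rceil>"

text \<open>The point x_k computed from (y_{k-1}, z_{k-1}).\<close>
definition x_of :: "nat \<Rightarrow> nat \<Rightarrow> real \<Rightarrow> (nat \<Rightarrow> real) \<times> (nat \<Rightarrow> real) \<Rightarrow> nat \<Rightarrow> real" where
  "x_of m n eps s = (\<lambda>l. tau_par m n eps * snd s l + (1 - tau_par m n eps) * fst s l)"

text \<open>Iteration k of Algorithm 1 with selected coordinate i, mapping (y_{k-1}, z_{k-1})
  to (y_k, z_k).\<close>
definition alg_step :: "(nat \<Rightarrow> nat \<Rightarrow> real) \<Rightarrow> nat \<Rightarrow> nat \<Rightarrow> real \<Rightarrow> nat \<Rightarrow> nat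
    \<Rightarrow> (nat \<Rightarrow> real) \<times> (nat \<Rightarrow> real) \<Rightarrow> (nat \<Rightarrow> real) \<times> (nat \<Rightarrow> real)" where
  "alg_step A m n eps k i s =
    (let mu = mu_par m n eps; L = L_par m n eps; a = alpha_k m n eps k;
         x = x_of m n eps s; z = snd s;
         \<xi> = clamp (-1) 1 (partial (f_mu A m n mu) i x);
         z' = z(i := clamp 0 (3 / colmax A m i) (z i - real n * a * \<xi> / colmax A m i));
         y' = (\<lambda>l. x l + (1 / (real n * a * L)) * (z' l - z l))
     in (y', z'))"

text \<open>State (y_k, z_k) after k iterations, for the choice sequence c (c k = coordinate
  selected in iteration k).\<close>
fun alg_state :: "(nat \<Rightarrow> nat \<Rightarrow> real) \<Rightarrow> nat \<Rightarrow> nat \<Rightarrow> real \<Rightarrow> (nat \<Rightarrow> real) \<Rightarrow> (nat \<Rightarrow> nat)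
    \<Rightarrow> nat \<Rightarrow> (nat \<Rightarrow> real) \<times> (nat \<Rightarrow> real)" where
  "alg_state A m n eps xs c 0 = (xs, xs)"
| "alg_state A m n eps xs c (Suc k) = alg_step A m n eps (Suc k) (c (Suc k)) (alg_state A m n eps xs c k)"

end

theory Submission
  imports Defs
begin
lemma exp_quad: fixes u::real assumes "\<bar>u\<bar> \<le> 1" shows "exp u \<le> 1 + u + u^2"
proof (cases "u \<ge> 0")
  case True thus ?thesis using exp_bound assms by auto
next
  case False
  have e: "1 - u \<le> exp (-u)" using exp_ge_add_one_self[of "-u"] by simp
  have "exp u * exp (-u) = 1" by (simp add: exp_minus)
  hence p: "exp u * (1 - u) \<le> 1" using e by (metis exp_gt_zero less_eq_real_def mult_left_mono)
  have "u*u \<ge> 0" by simp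
  hence c: "u^3 \<le> 0" using False by (simp add: power3_eq_cube mult_nonneg_nonpos)  
  have "(1 + u + u^2) * (1 - u) = 1 - u^3" by (simp add: algebra_simps power2_eq_square power3_eq_cube)
  hence q: "(1 + u + u^2) * (1 - u) \<ge> 1" using c by simp
  have "exp u * (1 - u) \<le> (1 + u + u^2) * (1 - u)" using p q by linarith
  thus ?thesis using False by (simp add: mult_le_cancel_right)
qed

lemma key:
  fixes mu C th g :: real and a b :: "nat \<Rightarrow> real" and m :: nat
  assumes mu: "mu > 0" and C: "C > 0" and a: "\<forall>j<m. 0 \<le> a j \<and> a j \<le> C"
    and th: "0 \<le> th" "th \<le> 1"
    and g: "g = 1 - (\<Sum>j<m. a j * exp (b j))"
    and xi: "xi = clamp (-1) 1 g" and d: "d = - th * xi * mu / (4*C)"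
  shows "d + mu * (\<Sum>j<m. exp (b j - a j * d / mu)) - mu * (\<Sum>j<m. exp (b j)) \<le> g * d / 2"
proof -
  define p where "p = (\<Sum>j<m. a j * exp (b j))"
  have p0: "p \<ge> 0" unfolding p_def using a by (intro sum_nonneg) auto
  have gp: "g = 1 - p" using g p_def by simp
  have xib: "\<bar>xi\<bar> \<le> 1" using xi by (simp add: clamp_def)
  have ub: "\<bar>a j * d / mu\<bar> \<le> 1" if j: "j < m" for j
  proof -
    have "a j * d / mu = - (a j / C) * th * xi / 4" using mu C by (simp add: d field_simps)
    hence "\<bar>a j * d / mu\<bar> = (a j / C) * th * \<bar>xi\<bar> / 4" using a j th C by (simp add: abs_mult)
    also have "\<dots> \<le> 1 * 1 * 1 / 4"
      using a j th C xib by (intro divide_right_mono mult_mono) (auto simp: divide_le_eq_1)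
    finally have "\<bar>a j * d / mu\<bar> \<le> 1 * 1 * 1 / 4" .
    thus ?thesis by linarith
  qed
  have tmb: "exp (b j - a j * d / mu) \<le> exp (b j) * (1 - a j * d / mu + (a j * d / mu)^2)" if j: "j < m" for j
  proof -
    have "exp (b j - a j * d / mu) = exp (b j) * exp (- (a j * d / mu))" by (simp add: exp_diff exp_minus field_simps)
    also have "\<dots> \<le> exp (b j) * (1 + - (a j * d / mu) + (- (a j * d / mu))^2)"
      using exp_quad[of "- (a j * d / mu)"] ub[OF j] by (intro mult_left_mono) auto
    finally show ?thesis by simp
  qed
  have "mu * (\<Sum>j<m. exp (b j - a j * d / mu)) \<le> mu * (\<Sum>j<m. exp (b j) * (1 - a j * d / mu + (a j * d / mu)^2))"
    using mu tmb by (intro mult_left_mono sum_mono) auto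
  also have "\<dots> = mu * (\<Sum>j<m. exp (b j)) - d * p + (d^2 / mu) * (\<Sum>j<m. a j * (a j * exp (b j)))"
  proof -
    have "mu * (\<Sum>j<m. exp (b j) * (1 - a j * d / mu + (a j * d / mu)^2)) = (\<Sum>j<m. mu * exp (b j) - d * (a j * exp (b j)) + (d^2 / mu) * (a j * (a j * exp (b j))))"
      unfolding sum_distrib_left using mu by (intro sum.cong refl) (simp add: field_simps power2_eq_square)
    also have "\<dots> = mu * (\<Sum>j<m. exp (b j)) - d * p + (d^2 / mu) * (\<Sum>j<m. a j * (a j * exp (b j)))"
      by (simp add: p_def sum.distrib sum_subtractf sum_distrib_left)
    finally show ?thesis .
  qed
  also have "(\<Sum>j<m. a j * (a j * exp (b j))) \<le> (\<Sum>j<m. C * (a j * exp (b j)))"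
    using a by (intro sum_mono mult_right_mono) auto
  hence "(d^2 / mu) * (\<Sum>j<m. a j * (a j * exp (b j))) \<le> (d^2 / mu) * (C * p)"
    using mu by (intro mult_left_mono) (auto simp: p_def sum_distrib_left)
  finally have A: "d + mu * (\<Sum>j<m. exp (b j - a j * d / mu)) - mu * (\<Sum>j<m. exp (b j)) \<le> d - d * p + (d^2/mu) * (C*p)"
    by linarith
  have key2: "xi^2 * p \<le> 2 * g * xi"
  proof (cases "g \<ge> 1")
    case True thus ?thesis using gp xi by (simp add: clamp_def)
  next
    case False
    show ?thesis
    proof (cases "g \<ge> -1")
      case True
      hence x: "xi = g" using False xi by (simp add: clamp_def)
      have "g^2 * p \<le> g^2 * 2" using gp True by (intro mult_left_mono) auto
      thus ?thesis using x by (simp add: power2_eq_square)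
    next
      case F2: False
      hence "xi = -1" using xi by (simp add: clamp_def)
      thus ?thesis using gp F2 by simp
    qed
  qed
  have "th * xi^2 * p \<le> 2 * g * xi"
    using key2 th p0 by (smt (verit) mult_left_le_one_le mult_nonneg_nonneg zero_le_power2 mult.assoc)
  hence "th * (mu / (16 * C)) * (th * xi^2 * p - 2 * g * xi) \<le> 0"
    using th mu C by (intro mult_nonneg_nonpos) auto
  moreover have "d - d * p + (d^2/mu) * (C*p) - g * d / 2 = th * (mu / (16 * C)) * (th * xi^2 * p - 2 * g * xi)"
    using mu C by (simp add: d gp field_simps power2_eq_square)
  ultimately show ?thesis using A by linarith
qed
lemma sum_upd: fixes x :: "nat \<Rightarrow> real" shows "i < n \<Longrightarrow> (\<Sum>l<n. (x(i:=t)) l) = (\<Sum>l<n. x l) + (t - x i)"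
proof -
  assume i: "i < n"
  have "(\<Sum>l<n. (x(i:=t)) l) = (\<Sum>l<n. x l + (if l = i then t - x i else 0))"
    by (intro sum.cong) auto
  also have "\<dots> = (\<Sum>l<n. x l) + (t - x i)" using i by (simp add: sum.distrib)
  finally show ?thesis .
qed

lemma Amul_upd: "i < n \<Longrightarrow> Amul A n (x(i:=t)) j = Amul A n x j + A j i * (t - x i)"
proof -
  assume i: "i < n"
  have "Amul A n (x(i:=t)) j = (\<Sum>l<n. A j l * x l + (if l = i then A j i * (t - x i) else 0))"
    unfolding Amul_def by (intro sum.cong) (auto simp: algebra_simps)
  also have "\<dots> = Amul A n x j + A j i * (t - x i)" using i by (simp add: sum.distrib Amul_def)
  finally show ?thesis .
qed

lemma f_upd: "i < n \<Longrightarrow> f_mu A m n mu (x(i:=t)) = (\<Sum>l<n. x l) + (t - x i)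
   + mu * (\<Sum>j<m. exp ((1 - Amul A n x j)/mu - A j i * (t - x i)/mu))"
proof -
  assume i: "i < n"
  have "(\<Sum>j<m. exp ((1 - Amul A n (x(i:=t)) j) / mu)) = (\<Sum>j<m. exp ((1 - Amul A n x j)/mu - A j i * (t - x i)/mu))"
    using i by (intro sum.cong refl) (simp add: Amul_upd diff_divide_distrib add_divide_distrib)
  thus ?thesis unfolding f_mu_def sum_upd[OF i] by simp
qed

lemma partial_f: assumes i: "i < n" and mu: "mu \<noteq> 0"
  shows "partial (f_mu A m n mu) i x = 1 - (\<Sum>j<m. A j i * exp ((1 - Amul A n x j)/mu))"
proof -
  have e: "(\<lambda>t. f_mu A m n mu (x(i := t))) = (\<lambda>t. (\<Sum>l<n. x l) + (t - x i)
   + mu * (\<Sum>j<m. exp ((1 - Amul A n x j)/mu - A j i * (t - x i)/mu)))"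
    using i by (simp add: f_upd)
  have "((\<lambda>t. (\<Sum>l<n. x l) + (t - x i)
   + mu * (\<Sum>j<m. exp ((1 - Amul A n x j)/mu - A j i * (t - x i)/mu))) has_real_derivative
     (1 - (\<Sum>j<m. A j i * exp ((1 - Amul A n x j)/mu)))) (at (x i))"
    using mu by (auto intro!: derivative_eq_intros simp: sum_distrib_left sum_negf[symmetric] mult.commute)
  thus ?thesis unfolding partial_def e by (rule DERIV_imp_deriv)
qed
lemma clamp_theta: fixes lo hi z v :: real assumes "lo \<le> z" "z \<le> hi"
  shows "\<exists>th. 0 \<le> th \<and> th \<le> 1 \<and> clamp lo hi v - z = th * (v - z)"
proof (cases "v < lo")
  case True
  hence "clamp lo hi v = lo" using assms by (simp add: clamp_def)
  moreover have "0 \<le> (lo - z)/(v - z)" "(lo - z)/(v - z) \<le> 1" using True assms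
    by (auto simp: divide_simps)
  moreover have "lo - z = (lo - z)/(v - z) * (v - z)" using True assms by simp
  ultimately show ?thesis by metis
next
  case F: False
  show ?thesis
  proof (cases "v > hi")
    case True
    hence "clamp lo hi v = hi" using assms by (simp add: clamp_def)
    moreover have "0 \<le> (hi - z)/(v - z)" "(hi - z)/(v - z) \<le> 1" using True assms
      by (auto simp: divide_simps)
    moreover have "hi - z = (hi - z)/(v - z) * (v - z)" using True assms by simp
    ultimately show ?thesis by metis
  next
    case False
    hence "clamp lo hi v = v" using F by (simp add: clamp_def)
    thus ?thesis by (intro exI[of _ 1]) simp
  qed
qed

lemma colmax_ge: "j < m \<Longrightarrow> A j l \<le> colmax A m l"
  unfolding colmax_def by (intro Max_ge) auto

lemma snd_step: "snd (alg_step A m n eps k i s) = (snd s)(i := clamp 0 (3 / colmax A m i)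
   (snd s i - real n * alpha_k m n eps k * clamp (-1) 1 (partial (f_mu A m n (mu_par m n eps)) i (x_of m n eps s)) / colmax A m i))"
  by (simp add: alg_step_def Let_def)

lemma fst_step: "fst (alg_step A m n eps k i s) = (\<lambda>l. x_of m n eps s l + (1 / (real n * alpha_k m n eps k * L_par m n eps)) *
   (((snd s)(i := clamp 0 (3 / colmax A m i)
   (snd s i - real n * alpha_k m n eps k * clamp (-1) 1 (partial (f_mu A m n (mu_par m n eps)) i (x_of m n eps s)) / colmax A m i))) l - snd s l))"
  by (simp add: alg_step_def Let_def)

lemma z_inv: assumes nonneg: "\<forall>j<m. \<forall>l<n. A j l \<ge> 0" and m: "0 < m" and start: "xs \<in> Delta A m n"
  shows "\<forall>l<n. 0 \<le> snd (alg_state A m n eps xs c k) l \<and> snd (alg_state A m n eps xs c k) l \<le> 3 / colmax A m l"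
proof (induction k)
  case 0 thus ?case using start by (simp add: Delta_def)
next
  case (Suc k)
  show ?case
  proof (intro allI impI)
    fix l assume l: "l < n"
    have "A 0 l \<ge> 0" using nonneg m l by auto
    hence "colmax A m l \<ge> 0" using colmax_ge[OF m, of A l] by linarith
    hence h: "3 / colmax A m l \<ge> 0" by simp
    show "0 \<le> snd (alg_state A m n eps xs c (Suc k)) l \<and> snd (alg_state A m n eps xs c (Suc k)) l \<le> 3 / colmax A m l"
      using Suc l h by (auto simp: snd_step clamp_def)
  qed
qed
theorem lemma9:
  fixes A :: "nat \<Rightarrow> nat \<Rightarrow> real" and m n :: nat and eps :: real
    and xs :: "nat \<Rightarrow> real" and c :: "nat \<Rightarrow> nat" and k i :: nat
  assumes nonneg: "\<forall>j<m. \<forall>l<n. A j l \<ge> 0"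
    and cols: "\<forall>l<n. \<exists>j<m. A j l \<noteq> 0"
    and eps: "0 < eps" "eps < 1"
    and start: "xs \<in> Delta A m n"
    and k: "1 \<le> k" "k \<le> T_par m n eps"
    and choices: "\<forall>j. 1 \<le> j \<and> j < k \<longrightarrow> c j < n"
    and i: "i < n"
  shows "let mu = mu_par m n eps; f = f_mu A m n mu;
             s = alg_state A m n eps xs c (k - 1);
             x = x_of m n eps s;
             y = fst (alg_step A m n eps k i s)
         in f x - f y \<ge> 1/2 * (\<Sum>l<n. partial f l x * (x l - y l))"
proof -
  obtain j0 where j0: "j0 < m" "A j0 i \<noteq> 0" using cols i by blast
  have m: "0 < m" using j0 by simp
  define C where "C = colmax A m i"
  have aC: "\<forall>j<m. 0 \<le> A j i \<and> A j i \<le> C" using nonneg i colmax_ge C_def by auto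
  have C: "C > 0" using aC j0 by (metis less_eq_real_def order_less_le_trans)
  have "(1::nat) \<le> n * m" using i m by (simp add: Suc_le_eq)
  hence n1: "real n * real m \<ge> 1" by (metis of_nat_1 of_nat_le_iff of_nat_mult)
  have "real n * real m / eps > 1" using n1 eps by (simp add: field_simps)
  hence "ln (real n * real m / eps) > 0" by simp
  hence mupos: "mu_par m n eps > 0" using eps by (simp add: mu_par_def)
  define mu where "mu = mu_par m n eps"
  define f where "f = f_mu A m n mu"
  define s where "s = alg_state A m n eps xs c (k - 1)"
  define x where "x = x_of m n eps s"
  define y where "y = fst (alg_step A m n eps k i s)"
  define z where "z = snd s"
  define al where "al = alpha_k m n eps k"
  define L where "L = L_par m n eps"
  define g where "g = partial f i x"
  define xi where "xi = clamp (-1) 1 g"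
  define v where "v = z i - real n * al * xi / C"
  define d where "d = (1 / (real n * al * L)) * (clamp 0 (3 / C) v - z i)"
  have mu0: "mu > 0" using mupos mu_def by simp
  have L: "L = 4 / mu" by (simp add: L_def L_par_def mu_def)
  have yeq: "y = x(i := x i + d)"
  proof
    fix l show "y l = (x(i := x i + d)) l"
      unfolding y_def fst_step d_def v_def xi_def g_def f_def mu_def x_def z_def al_def L_def C_def
      by auto
  qed
  have zi: "0 \<le> z i" "z i \<le> 3 / C" using z_inv[OF nonneg m start, of eps c "k-1"] i
    by (auto simp: z_def s_def C_def)
  obtain th0 where th0: "0 \<le> th0" "th0 \<le> 1" "clamp 0 (3/C) v - z i = th0 * (v - z i)"
    using clamp_theta[OF zi] by blast
  define th where "th = (if real n * al = 0 then 0 else th0)"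
  have th: "0 \<le> th" "th \<le> 1" using th0 by (auto simp: th_def)
  have dth: "d = - th * xi * mu / (4 * C)"
  proof (cases "real n * al = 0")
    case True thus ?thesis by (simp add: d_def th_def)
  next
    case False
    hence "d = (1 / (real n * al * (4/mu))) * (th0 * (- (real n * al * xi / C)))"
      unfolding d_def th0(3) by (simp add: v_def L)
    also have "\<dots> = - th * xi * mu / (4 * C)" using False mu0 C by (simp add: th_def field_simps)
    finally show ?thesis .
  qed
  define b where "b = (\<lambda>j. (1 - Amul A n x j) / mu)"
  have gdef: "g = 1 - (\<Sum>j<m. A j i * exp (b j))"
    unfolding g_def f_def b_def using partial_f[OF i] mu0 by simp
  have K: "d + mu * (\<Sum>j<m. exp (b j - A j i * d / mu)) - mu * (\<Sum>j<m. exp (b j)) \<le> g * d / 2"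
    using key[OF mu0 C aC th gdef xi_def dth] .
  have fy: "f y = (\<Sum>l<n. x l) + d + mu * (\<Sum>j<m. exp (b j - A j i * d / mu))"
    unfolding yeq f_def f_upd[OF i] b_def by simp
  have fx: "f x = (\<Sum>l<n. x l) + mu * (\<Sum>j<m. exp (b j))"
    using f_upd[OF i, of A m mu x "x i"] unfolding f_def b_def by simp
  have "(\<Sum>l<n. partial f l x * (x l - y l)) = (\<Sum>l<n. if l = i then g * (- d) else 0)"
    by (intro sum.cong) (auto simp: yeq g_def)
  also have "\<dots> = g * (- d)" using i by simp
  finally have S: "(\<Sum>l<n. partial f l x * (x l - y l)) = g * (- d)" .
  have fin: "f x - f y \<ge> 1/2 * (\<Sum>l<n. partial f l x * (x l - y l))"
    unfolding S fx fy using K by linarith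
  show ?thesis unfolding Let_def mu_def[symmetric] f_def[symmetric] s_def[symmetric] x_def[symmetric] y_def[symmetric]
    by (rule fin)
qed

end
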